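(* Let $t\ge 1$ and let $S=\{s_0,s_1,\ldots,s_t\}\subseteq BS^{+}(1,3)$ with $s_0=a^{x_0}$ and $s_i=b^{m_i}a^{x_i}$ for $1\le i\le t$, where $x_0,x_1,\dots,x_t\in\mathbb Z$ and $0<m_1<m_2<\cdots<m_t$ are integers; thus $k=|S|=t+1\ge 2$ and $S$ meets each coset $b^{m}a^{\mathbb Z}$ in at most one element. Suppose that $S$ is non-abelian and that the subgroup generated by $T=S\setminus\{s_0\}$ is abelian. Then $|S^2|\geq 4k-4$.
   Context: $BS(1,3)=\langle a,b\mid ab=ba^3\rangle$; $BS^{+}(1,3)=\{b^m a^x: m\in\mathbb{Z}_{\ge 0},\ x\in\mathbb{Z}\}$, with $(b^m a^x)(b^n a^y)=b^{m+n}a^{y+3^n x}$. $S^2=\{st: s,t\in S\}$. A set is non-abelian if the subgroup it generates is non-abelian. *)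

theory Defs
  imports Complex_Main "HOL-Algebra.Generated_Groups"
begin

text \<open>Model of BS(1,3) = <a,b | ab = ba^3> as the semidirect product Z[1/3] x| Z:
  the element b^m a^x (m in Z, x in Z[1/3]) is the pair (m, x), and
  (b^m a^x)(b^n a^y) = b^(m+n) a^(y + 3^n x).  This is the standard faithful
  representation of BS(1,3).\<close>

definition BS13 :: "(int \<times> rat) monoid" where
  "BS13 = \<lparr> carrier = {(m, x). \<exists>j::nat. x * 3 ^ j \<in> \<int>},
            mult = (\<lambda>(m, x) (n, y). (m + n, y + (3::rat) powi n * x)),
            one = (0, 0) \<rparr>"

definition bsp :: "nat \<Rightarrow> int \<Rightarrow> int \<times> rat" where
  "bsp m x = (int m, of_int x)"

definition setsq :: "(int \<times> rat) set \<Rightarrow> (int \<times> rat) set" where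
  "setsq S = {s \<otimes>\<^bsub>BS13\<^esub> t | s t. s \<in> S \<and> t \<in> S}"

definition abelian_set :: "(int \<times> rat) set \<Rightarrow> bool" where
  "abelian_set S = (\<forall>g\<in>generate BS13 S. \<forall>h\<in>generate BS13 S.
        g \<otimes>\<^bsub>BS13\<^esub> h = h \<otimes>\<^bsub>BS13\<^esub> g)"

end

theory Submission imports Defs begin

lemma mult_pair: "(a, u) \<otimes>\<^bsub>BS13\<^esub> (b, v) = (a + b, v + 3 powi b * u)"
  by (simp add: BS13_def)

lemma mult_bsp: "bsp a u \<otimes>\<^bsub>BS13\<^esub> bsp b v = (int a + int b, of_int v + 3^b * of_int u)"
  by (simp add: BS13_def bsp_def)

lemma inv_bsp: "inv\<^bsub>BS13\<^esub> (bsp n z) = (- int n, - of_int z / 3^n)"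
  unfolding m_inv_def
proof (rule the_equality)
  show "(- int n, - of_int z / 3^n) \<in> carrier BS13 \<and>
    bsp n z \<otimes>\<^bsub>BS13\<^esub> (- int n, - of_int z / 3^n) = \<one>\<^bsub>BS13\<^esub> \<and>
    (- int n, - of_int z / 3^n) \<otimes>\<^bsub>BS13\<^esub> bsp n z = \<one>\<^bsub>BS13\<^esub>"
  proof (intro conjI)
    have "(- of_int z / 3^n) * 3^n \<in> (\<int>::rat set)" by simp
    then have "\<exists>j::nat. (- of_int z / 3^n) * 3^j \<in> (\<int>::rat set)" by blast
    then show "(- int n, - of_int z / 3^n) \<in> carrier BS13"
      unfolding BS13_def by simp
  qed (simp_all add: BS13_def bsp_def power_int_minus inverse_eq_divide)
next
  fix y assume "y \<in> carrier BS13 \<and> bsp n z \<otimes>\<^bsub>BS13\<^esub> y = \<one>\<^bsub>BS13\<^esub> \<and>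
    y \<otimes>\<^bsub>BS13\<^esub> bsp n z = \<one>\<^bsub>BS13\<^esub>"
  then have h: "bsp n z \<otimes>\<^bsub>BS13\<^esub> y = (0,0)" by (simp add: BS13_def)
  obtain b v where y: "y = (b, v)" by force
  from h have "b = - int n" and "v + 3 powi b * of_int z = 0"
    by (auto simp: BS13_def bsp_def y)
  then show "y = (- int n, - of_int z / 3^n)"
    by (auto simp: y power_int_minus inverse_eq_divide algebra_simps)
qed

definition curve :: "rat \<Rightarrow> (int \<times> rat) set" where
  "curve c = {(p, c * (3 powi p - 1)) | p. True}"

lemma curve_mult:
  assumes "g \<in> curve c" "h \<in> curve c"
  shows "g \<otimes>\<^bsub>BS13\<^esub> h \<in> curve c" "g \<otimes>\<^bsub>BS13\<^esub> h = h \<otimes>\<^bsub>BS13\<^esub> g"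
proof -
  obtain p where g: "g = (p, c * (3 powi p - 1))" using assms(1) by (auto simp: curve_def)
  obtain q where h: "h = (q, c * (3 powi q - 1))" using assms(2) by (auto simp: curve_def)
  have e: "g \<otimes>\<^bsub>BS13\<^esub> h = (p + q, c * (3 powi (p+q) - 1))"
    by (simp add: g h mult_pair power_int_add algebra_simps)
  have e2: "h \<otimes>\<^bsub>BS13\<^esub> g = (p + q, c * (3 powi (p+q) - 1))"
    by (simp add: g h mult_pair power_int_add algebra_simps)
  show "g \<otimes>\<^bsub>BS13\<^esub> h \<in> curve c" by (auto simp: e curve_def)
  show "g \<otimes>\<^bsub>BS13\<^esub> h = h \<otimes>\<^bsub>BS13\<^esub> g" by (simp add: e e2)
qed

lemma generate_curve:
  assumes "\<And>s. s \<in> S \<Longrightarrow> \<exists>n z. s = bsp n z \<and> of_int z = c * (3^n - 1)"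
  shows "generate BS13 S \<subseteq> curve c"
proof
  fix g assume "g \<in> generate BS13 S"
  then show "g \<in> curve c"
  proof induction
    case one
    have "(0::int, c * (3 powi 0 - 1)) \<in> curve c" unfolding curve_def by blast
    then show ?case by (simp add: BS13_def)
  next
    case (incl h)
    then obtain n z where "h = bsp n z" "of_int z = c * (3^n - 1)" using assms by blast
    then have "h = (int n, c * (3 powi (int n) - 1))" by (simp add: bsp_def)
    then show ?case unfolding curve_def by blast
  next
    case (inv h)
    then obtain n z where h: "h = bsp n z" "of_int z = c * (3^n - 1)" using assms by blast
    have "inv\<^bsub>BS13\<^esub> h = (- int n, c * (3 powi (- int n) - 1))"
      by (simp add: h inv_bsp power_int_minus inverse_eq_divide field_simps)
    then show ?case unfolding curve_def by blast
  next
    case (eng h1 h2)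
    then show ?case by (simp add: curve_mult)
  qed
qed

theorem lemma2p3:
  fixes t :: nat and x :: "nat \<Rightarrow> int" and m :: "nat \<Rightarrow> nat" and S :: "(int \<times> rat) set"
  assumes "t \<ge> 1"
    and "0 < m 1"
    and "\<And>i j. 1 \<le> i \<Longrightarrow> i < j \<Longrightarrow> j \<le> t \<Longrightarrow> m i < m j"
    and "S = insert (bsp 0 (x 0)) ((\<lambda>i. bsp (m i) (x i)) ` {1..t})"
    and "\<not> abelian_set S"
    and "abelian_set (S - {bsp 0 (x 0)})"
  shows "card (setsq S) \<ge> 4 * card S - 4"
proof -
  note mono = assms(3)
  have mle: "m i \<le> m j" if "1 \<le> i" "i \<le> j" "j \<le> t" for i j
    using mono[of i j] that by (cases "i = j") auto
  have mpos: "0 < m i" if "i \<in> {1..t}" for i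
    using mle[of 1 i] assms(2) that by auto
  have minj: "i = j" if "i \<in> {1..t}" "j \<in> {1..t}" "m i = m j" for i j
    using mono[of i j] mono[of j i] that by (cases i j rule: linorder_cases) auto
  define X where "X i = (of_int (x i) :: rat)" for i
  define P where "P i = (3::rat) ^ m i" for i
  define c where "c = X 1 / (P 1 - 1)"
  have Pgt: "P i > 1" if "i \<in> {1..t}" for i
    using mpos[OF that] by (simp add: P_def)
  let ?s0 = "bsp 0 (x 0)"
  have sT: "bsp (m i) (x i) \<in> S - {?s0}" if "i \<in> {1..t}" for i
    using mpos[OF that] that by (auto simp: assms(4) bsp_def)
  have Xi: "X i = c * (P i - 1)" if i: "i \<in> {1..t}" for i
  proof -
    have 1: "(1::nat) \<in> {1..t}" using assms(1) by simp
    have "bsp (m 1) (x 1) \<otimes>\<^bsub>BS13\<^esub> bsp (m i) (x i) = bsp (m i) (x i) \<otimes>\<^bsub>BS13\<^esub> bsp (m 1) (x 1)"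
      using assms(6) sT[OF 1] sT[OF i] unfolding abelian_set_def
      by (meson generate.incl)
    then have "X i + P i * X 1 = X 1 + P 1 * X i"
      by (simp add: mult_bsp X_def P_def)
    then have "X i * (P 1 - 1) = X 1 * (P i - 1)" by (simp add: algebra_simps)
    then show ?thesis using Pgt[OF 1] by (simp add: c_def field_simps)
  qed
  have x0: "X 0 \<noteq> 0"
  proof
    assume "X 0 = 0"
    have "\<exists>n z. s = bsp n z \<and> of_int z = c * (3^n - 1)" if sS: "s \<in> S" for s
    proof (cases "s = ?s0")
      case True then show ?thesis using \<open>X 0 = 0\<close> by (intro exI[of _ 0] exI[of _ "x 0"]) (auto simp: X_def)
    next
      case False
      then obtain i where "i \<in> {1..t}" "s = bsp (m i) (x i)" using sS assms(4) by auto
      then show ?thesis using Xi[of i] by (auto simp: X_def P_def)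
    qed
    then have "generate BS13 S \<subseteq> curve c" by (rule generate_curve)
    then have "abelian_set S" unfolding abelian_set_def using curve_mult(2) by blast
    then show False using assms(5) by simp
  qed
  define A where "A = {(0::int, 2 * X 0)}"
  define B where "B = (\<lambda>i. (int (m i), X i + P i * X 0)) ` {1..t}"
  define C where "C = (\<lambda>i. (int (m i), X 0 + X i)) ` {1..t}"
  define D1 where "D1 = (\<lambda>i. (int (m i) + int (m i), X i + P i * X i)) ` {1..t}"
  define D2 where "D2 = (\<lambda>i. (int (m i) + int (m (i+1)), X (i+1) + P (i+1) * X i)) ` {1..<t}"
  have s0S: "?s0 \<in> S" and siS: "\<And>i. i \<in> {1..t} \<Longrightarrow> bsp (m i) (x i) \<in> S"
    using assms(4) by auto
  have sub: "A \<union> (B \<union> (C \<union> (D1 \<union> D2))) \<subseteq> setsq S"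
  proof -
    have "(0::int, 2 * X 0) = ?s0 \<otimes>\<^bsub>BS13\<^esub> ?s0" by (simp add: mult_bsp X_def)
    then have "A \<subseteq> setsq S"
      unfolding A_def setsq_def using s0S by blast
    moreover have "B \<subseteq> setsq S"
    proof
      fix p assume "p \<in> B"
      then obtain i where i: "i \<in> {1..t}" "p = (int (m i), X i + P i * X 0)" by (auto simp: B_def)
      then have "p = ?s0 \<otimes>\<^bsub>BS13\<^esub> bsp (m i) (x i)" by (simp add: mult_bsp X_def P_def)
      then show "p \<in> setsq S" unfolding setsq_def using s0S siS[OF i(1)] by blast
    qed
    moreover have "C \<subseteq> setsq S"
    proof
      fix p assume "p \<in> C"
      then obtain i where i: "i \<in> {1..t}" "p = (int (m i), X 0 + X i)" by (auto simp: C_def)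
      then have "p = bsp (m i) (x i) \<otimes>\<^bsub>BS13\<^esub> ?s0" by (simp add: mult_bsp X_def P_def)
      then show "p \<in> setsq S" unfolding setsq_def using s0S siS[OF i(1)] by blast
    qed
    moreover have "D1 \<subseteq> setsq S"
    proof
      fix p assume "p \<in> D1"
      then obtain i where i: "i \<in> {1..t}" "p = (int (m i) + int (m i), X i + P i * X i)" by (auto simp: D1_def)
      then have "p = bsp (m i) (x i) \<otimes>\<^bsub>BS13\<^esub> bsp (m i) (x i)" by (simp add: mult_bsp X_def P_def)
      then show "p \<in> setsq S" unfolding setsq_def using siS[OF i(1)] by blast
    qed
    moreover have "D2 \<subseteq> setsq S"
    proof
      fix p assume "p \<in> D2"
      then obtain i where i: "i \<in> {1..<t}" "p = (int (m i) + int (m (i+1)), X (i+1) + P (i+1) * X i)" by (auto simp: D2_def)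
      then have "p = bsp (m i) (x i) \<otimes>\<^bsub>BS13\<^esub> bsp (m (i+1)) (x (i+1))" by (simp add: mult_bsp X_def P_def)
      moreover have "i \<in> {1..t}" "i+1 \<in> {1..t}" using i by auto
      ultimately show "p \<in> setsq S" unfolding setsq_def using siS by blast
    qed
    ultimately show ?thesis by blast
  qed
  have finS: "finite S" using assms(4) by simp
  have "setsq S = (\<lambda>(s, u). s \<otimes>\<^bsub>BS13\<^esub> u) ` (S \<times> S)"
    unfolding setsq_def by auto
  then have fin: "finite (setsq S)" using finS by simp
  have cardS: "card S \<le> t + 1"
  proof -
    have "card S \<le> Suc (card ((\<lambda>i. bsp (m i) (x i)) ` {1..t}))"
      unfolding assms(4) by (rule card_insert_le_m1) simp_all
    also have "\<dots> \<le> Suc (card {1..t})" using card_image_le by (metis Suc_le_mono finite_atLeastAtMost)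
    finally show ?thesis by simp
  qed
  have Dcurve: "snd p = c * (3 ^ nat (fst p) - 1)" if "p \<in> D1 \<union> D2" for p
    using that
  proof
    assume "p \<in> D1"
    then obtain i where i: "i \<in> {1..t}" "p = (int (m i) + int (m i), X i + P i * X i)" by (auto simp: D1_def)
    have f: "fst p = int (m i + m i)" using i(2) by simp
    have "(3::rat) ^ nat (fst p) = P i * P i" unfolding f nat_int by (simp add: P_def power_add)
    moreover have "snd p = c * (P i * P i - 1)" using i(2) Xi[OF i(1)] by (simp add: algebra_simps)
    ultimately show ?thesis by simp
  next
    assume "p \<in> D2"
    then obtain i where i: "i \<in> {1..<t}" "p = (int (m i) + int (m (i+1)), X (i+1) + P (i+1) * X i)" by (auto simp: D2_def)
    have "i \<in> {1..t}" "i+1 \<in> {1..t}" using i by auto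
    have f: "fst p = int (m i + m (i+1))" using i(2) by simp
    have "(3::rat) ^ nat (fst p) = P i * P (i+1)" unfolding f nat_int by (simp add: P_def power_add)
    moreover have "snd p = c * (P i * P (i+1) - 1)"
      using i(2) Xi[OF \<open>i \<in> {1..t}\<close>] Xi[OF \<open>i+1 \<in> {1..t}\<close>] by (simp add: algebra_simps)
    ultimately show ?thesis by simp
  qed
  have dD: "D1 \<inter> D2 = {}"
  proof (rule ccontr)
    assume "D1 \<inter> D2 \<noteq> {}"
    then obtain p where p1: "p \<in> D1" and p2: "p \<in> D2" by blast
    from p1 obtain i where i: "i \<in> {1..t}" and fi: "fst p = int (m i) + int (m i)"
      unfolding D1_def by auto
    from p2 obtain j where j: "j \<in> {1..<t}" and fj: "fst p = int (m j) + int (m (j+1))"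
      unfolding D2_def by auto
    from fi fj have e: "m i + m i = m j + m (j+1)" by linarith
    show False
    proof (cases "i \<le> j")
      case True
      have "m i \<le> m j" using mle[of i j] True i j by simp
      moreover have "m j < m (j+1)" using mono[of j "j+1"] j by simp
      ultimately show False using e by linarith
    next
      case False
      have "m (j+1) \<le> m i" using mle[of "j+1" i] False i j by simp
      moreover have "m j < m (j+1)" using mono[of j "j+1"] j by simp
      ultimately show False using e by linarith
    qed
  qed
  have dC: "C \<inter> (D1 \<union> D2) = {}"
  proof (rule ccontr)
    assume "C \<inter> (D1 \<union> D2) \<noteq> {}"
    then obtain p where p: "p \<in> C" "p \<in> D1 \<union> D2" by blast
    then obtain i where i: "i \<in> {1..t}" "p = (int (m i), X 0 + X i)" unfolding C_def by blast
    have "X 0 + X i = c * (3 ^ m i - 1)" using Dcurve[OF p(2)] i(2) by simp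
    then show False using Xi[OF i(1)] x0 by (simp add: P_def)
  qed
  have dB: "B \<inter> (C \<union> (D1 \<union> D2)) = {}"
  proof (rule ccontr)
    assume "B \<inter> (C \<union> (D1 \<union> D2)) \<noteq> {}"
    then obtain p where p: "p \<in> B" "p \<in> C \<union> (D1 \<union> D2)" by blast
    then obtain i where i: "i \<in> {1..t}" "p = (int (m i), X i + P i * X 0)" unfolding B_def by blast
    have Pne: "P i \<noteq> 0" "P i - 1 \<noteq> 0" using Pgt[OF i(1)] by auto
    show False using p(2)
    proof
      assume "p \<in> C"
      then obtain j where j: "j \<in> {1..t}" "p = (int (m j), X 0 + X j)" unfolding C_def by blast
      from i(2) j(2) have "m i = m j" and e: "X i + P i * X 0 = X 0 + X j" by simp_all
      then have "i = j" using minj i(1) j(1) by blast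
      then have "(P i - 1) * X 0 = 0" using e by (simp add: algebra_simps)
      then show False using x0 Pne by simp
    next
      assume "p \<in> D1 \<union> D2"
      have "X i + P i * X 0 = c * (3 ^ m i - 1)" using Dcurve[OF \<open>p \<in> D1 \<union> D2\<close>] i(2) by simp
      then have "P i * X 0 = 0" using Xi[OF i(1)] by (simp add: P_def)
      then show False using x0 Pne by simp
    qed
  qed
  have dA: "A \<inter> (B \<union> (C \<union> (D1 \<union> D2))) = {}"
  proof -
    have "fst p > 0" if pin: "p \<in> B \<union> (C \<union> (D1 \<union> D2))" for p
    proof -
      obtain i where "i \<in> {1..t}" "fst p = int (m i) \<or> fst p = int (m i) + int (m i) \<or> fst p = int (m i) + int (m (i+1))"
        using pin unfolding B_def C_def D1_def D2_def by fastforce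
      then show ?thesis using mpos[of i] by auto
    qed
    then show ?thesis unfolding A_def by fastforce
  qed
  have cB: "card B = t"
    unfolding B_def by (subst card_image) (auto intro!: inj_onI intro: minj)
  have cC: "card C = t"
    unfolding C_def by (subst card_image) (auto intro!: inj_onI intro: minj)
  have cD1: "card D1 = t"
    unfolding D1_def by (subst card_image) (auto intro!: inj_onI intro: minj)
  have cD2: "card D2 = t - 1"
  proof -
    have "inj_on (\<lambda>i. (int (m i) + int (m (i+1)), X (i+1) + P (i+1) * X i)) {1..<t}"
    proof (rule inj_onI)
      fix i j assume i: "i \<in> {1..<t}" and j: "j \<in> {1..<t}"
        and "(int (m i) + int (m (i+1)), X (i+1) + P (i+1) * X i) =
             (int (m j) + int (m (j+1)), X (j+1) + P (j+1) * X j)"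
      then have e: "m i + m (i+1) = m j + m (j+1)" by simp
      show "i = j"
      proof (cases i j rule: linorder_cases)
        case less
        then show ?thesis using mono[of i j] mle[of "i+1" "j+1"] i j e by auto
      next
        case greater
        then show ?thesis using mono[of j i] mle[of "j+1" "i+1"] i j e by auto
      qed
    qed
    then show ?thesis unfolding D2_def by (simp add: card_image)
  qed
  have finB: "finite B" "finite C" "finite D1" "finite D2" "finite A"
    by (auto simp: A_def B_def C_def D1_def D2_def)
  have "card (A \<union> (B \<union> (C \<union> (D1 \<union> D2)))) = 1 + (t + (t + (t + (t - 1))))"
    using finB dA dB dC dD cB cC cD1 cD2
    by (simp add: card_Un_disjoint A_def)
  also have "\<dots> = 4 * t" using assms(1) by simp
  finally have "4 * t \<le> card (setsq S)"
    using card_mono[OF fin sub] by simp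
  then show ?thesis using cardS by simp
qed

end
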